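(* Let $(\Gamma,m)$ be a smooth closed Riemannian manifold and equip $\mathbb{R}^{n+1}\setminus\{0\}$ with the Riemannian metric $G(x)=\rho(x)\,\mathrm{Id}$, where $\rho(x)=\tfrac12+\tfrac1{2|x|^4}$. Let $f:\Gamma\times[0,T)\to\mathbb{R}^{n+1}\setminus\{0\}$ be a smooth solution of the extended harmonic map heat flow $f_t=\Delta_{m,G}f$. If $\big||f(\cdot,0)|-1\big|\le\delta$ on $\Gamma$ for some $\delta\in[0,1)$, then $\big||f|-1\big|\le\delta$ on $\Gamma\times[0,T)$.
   Context: Summation over repeated indices is used. For a map $f:(\Gamma,m)\to(\mathcal{N},G)$ with $\mathcal{N}\subset\mathbb{R}^{N}$ open, the map Laplacian is given in local coordinates on $\Gamma$ (Roman indices) and Euclidean coordinates on $\mathbb{R}^N$ (Greek indices) by $(\Delta_{m,G}f)^\alpha=m^{ij}\big(\partial_i\partial_jf^\alpha-\Gamma(m)^l_{ij}\partial_lf^\alpha+\Gamma(G)^\alpha_{\beta\gamma}\circ f\,\partial_if^\beta\partial_jf^\gamma\big)$, where $\Gamma(m),\Gamma(G)$ are the Christoffel symbols of $m$ and $G$. The metric $G$ above is obtained by averaging the Euclidean metric under the sphere inversion $x\mapsto x/|x|^2$, and the unit sphere is a totally geodesic submanifold for it. *)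

theory Defs
  imports "HOL-Analysis.Analysis"
begin

definition pd :: "('v::real_normed_vector \<Rightarrow> 'w::real_normed_vector) \<Rightarrow> 'v \<Rightarrow> 'v \<Rightarrow> 'w" where
  "pd h i x = frechet_derivative h (at x) i"

fun Ck :: "nat \<Rightarrow> 'a::euclidean_space set \<Rightarrow> ('a \<Rightarrow> 'b::real_normed_vector) \<Rightarrow> bool" where
  "Ck 0 S f = continuous_on S f"
| "Ck (Suc k) S f = ((\<forall>x\<in>S. f differentiable (at x)) \<and>
      (\<forall>b\<in>Basis. Ck k S (\<lambda>x. frechet_derivative f (at x) b)))"

definition smooth_open :: "'a::euclidean_space set \<Rightarrow> ('a \<Rightarrow> 'b::real_normed_vector) \<Rightarrow> bool" where
  "smooth_open S f \<longleftrightarrow> open S \<and> (\<forall>k. Ck k S f)"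

definition smooth_set :: "'a::euclidean_space set \<Rightarrow> ('a \<Rightarrow> 'b::real_normed_vector) \<Rightarrow> bool" where
  "smooth_set S f \<longleftrightarrow> (\<forall>p\<in>S. \<exists>W g. open W \<and> p \<in> W \<and> smooth_open W g \<and> (\<forall>q\<in>W \<inter> S. g q = f q))"

definition inv_comp :: "('v::euclidean_space \<Rightarrow> 'v \<Rightarrow> real) \<Rightarrow> 'v \<Rightarrow> 'v \<Rightarrow> real" where
  "inv_comp B = (THE H. (\<forall>i\<in>Basis. \<forall>k\<in>Basis. (\<Sum>j\<in>Basis. H i j * B j k) = (if i = k then 1 else 0))
                  \<and> (\<forall>i j. i \<notin> Basis \<or> j \<notin> Basis \<longrightarrow> H i j = 0))"

definition christoffel :: "('v::euclidean_space \<Rightarrow> 'v \<Rightarrow> 'v \<Rightarrow> real) \<Rightarrow> 'v \<Rightarrow> 'v \<Rightarrow> 'v \<Rightarrow> 'v \<Rightarrow> real" where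
  "christoffel g x l i j = (\<Sum>k\<in>Basis. inv_comp (g x) l k *
      (pd (\<lambda>y. g y j k) i x + pd (\<lambda>y. g y i k) j x - pd (\<lambda>y. g y i j) k x)) / 2"

definition map_laplacian :: "('d::euclidean_space \<Rightarrow> 'd \<Rightarrow> 'd \<Rightarrow> real) \<Rightarrow> ('e::euclidean_space \<Rightarrow> 'e \<Rightarrow> 'e \<Rightarrow> real)
      \<Rightarrow> ('d \<Rightarrow> 'e) \<Rightarrow> 'd \<Rightarrow> 'e" where
  "map_laplacian m G F x = (\<Sum>i\<in>Basis. \<Sum>j\<in>Basis. inv_comp (m x) i j *\<^sub>R
      (pd (pd F j) i x - (\<Sum>l\<in>Basis. christoffel m x l i j *\<^sub>R pd F l x)
       + (\<Sum>\<alpha>\<in>Basis. (\<Sum>\<beta>\<in>Basis. \<Sum>\<gamma>\<in>Basis.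
            christoffel G (F x) \<alpha> \<beta> \<gamma> * (pd F i x \<bullet> \<beta>) * (pd F j x \<bullet> \<gamma>)) *\<^sub>R \<alpha>)))"

definition rho :: "'e::euclidean_space \<Rightarrow> real" where
  "rho y = 1/2 + 1 / (2 * norm y ^ 4)"

definition Gmetric :: "'e::euclidean_space \<Rightarrow> 'e \<Rightarrow> 'e \<Rightarrow> real" where
  "Gmetric y u v = rho y * (u \<bullet> v)"

text \<open>A smooth closed Riemannian manifold: the whole (Hausdorff) type 'a, compact,
  with a smooth atlas A of charts (U, phi, psi) (psi the inverse of phi on phi ` U), and a
  Riemannian metric given in each chart c by the bilinear forms M c x.\<close>
definition closed_riemannian ::
  "('a::t2_space set \<times> ('a \<Rightarrow> 'd::euclidean_space) \<times> ('d \<Rightarrow> 'a)) set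
   \<Rightarrow> (('a set \<times> ('a \<Rightarrow> 'd) \<times> ('d \<Rightarrow> 'a)) \<Rightarrow> 'd \<Rightarrow> 'd \<Rightarrow> 'd \<Rightarrow> real) \<Rightarrow> bool" where
  "closed_riemannian A M \<longleftrightarrow>
     compact (UNIV :: 'a set) \<and>
     (\<forall>U \<phi> \<psi>. (U, \<phi>, \<psi>) \<in> A \<longrightarrow> open U \<and> open (\<phi> ` U) \<and> homeomorphism U (\<phi> ` U) \<phi> \<psi>) \<and>
     (\<forall>p. \<exists>U \<phi> \<psi>. (U, \<phi>, \<psi>) \<in> A \<and> p \<in> U) \<and>
     (\<forall>U \<phi> \<psi> V \<kappa> \<theta>. (U, \<phi>, \<psi>) \<in> A \<longrightarrow> (V, \<kappa>, \<theta>) \<in> A \<longrightarrow>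
         smooth_set (\<phi> ` (U \<inter> V)) (\<kappa> \<circ> \<psi>)) \<and>
     (\<forall>U \<phi> \<psi>. (U, \<phi>, \<psi>) \<in> A \<longrightarrow>
        (\<forall>x\<in>\<phi> ` U. bilinear (M (U, \<phi>, \<psi>) x) \<and> (\<forall>u v. M (U, \<phi>, \<psi>) x u v = M (U, \<phi>, \<psi>) x v u)
                    \<and> (\<forall>u. u \<noteq> 0 \<longrightarrow> M (U, \<phi>, \<psi>) x u u > 0)) \<and>
        (\<forall>i\<in>Basis. \<forall>j\<in>Basis. smooth_set (\<phi> ` U) (\<lambda>x. M (U, \<phi>, \<psi>) x i j))) \<and>
     (\<forall>U \<phi> \<psi> V \<kappa> \<theta>. (U, \<phi>, \<psi>) \<in> A \<longrightarrow> (V, \<kappa>, \<theta>) \<in> A \<longrightarrow>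
        (\<forall>p\<in>U \<inter> V. \<forall>u v. M (U, \<phi>, \<psi>) (\<phi> p) u v =
            M (V, \<kappa>, \<theta>) (\<kappa> p) (frechet_derivative (\<kappa> \<circ> \<psi>) (at (\<phi> p)) u)
                               (frechet_derivative (\<kappa> \<circ> \<psi>) (at (\<phi> p)) v)))"

definition ehmhf_solution ::
  "('a::t2_space set \<times> ('a \<Rightarrow> 'd::euclidean_space) \<times> ('d \<Rightarrow> 'a)) set
   \<Rightarrow> (('a set \<times> ('a \<Rightarrow> 'd) \<times> ('d \<Rightarrow> 'a)) \<Rightarrow> 'd \<Rightarrow> 'd \<Rightarrow> 'd \<Rightarrow> real) \<Rightarrow> real
   \<Rightarrow> ('a \<Rightarrow> real \<Rightarrow> 'e::euclidean_space) \<Rightarrow> bool" where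
  "ehmhf_solution A M T f \<longleftrightarrow>
     (\<forall>p. \<forall>t\<in>{0..<T}. f p t \<noteq> 0) \<and>
     (\<forall>U \<phi> \<psi>. (U, \<phi>, \<psi>) \<in> A \<longrightarrow>
        smooth_set (\<phi> ` U \<times> {0..<T}) (\<lambda>(x, t). f (\<psi> x) t) \<and>
        (\<forall>p\<in>U. \<forall>t\<in>{0..<T}.
           ((\<lambda>s. f p s) has_vector_derivative
               map_laplacian (M (U, \<phi>, \<psi>)) Gmetric (\<lambda>x. f (\<psi> x) t) (\<phi> p)) (at t within {0..<T})))"

end

theory Submission
  imports Defs
begin

lemma trace_le0:
  fixes P Q :: "'i \<Rightarrow> 'i \<Rightarrow> real"
  assumes "finite I"
  shows "(\<forall>i\<in>I. \<forall>j\<in>I. P i j = P j i) \<Longrightarrow>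
    (\<forall>v. (\<exists>i\<in>I. v i \<noteq> 0) \<longrightarrow> (\<Sum>i\<in>I. \<Sum>j\<in>I. v i * v j * P i j) > 0) \<Longrightarrow>
    (\<forall>v. (\<Sum>i\<in>I. \<Sum>j\<in>I. v i * v j * Q i j) \<le> 0) \<Longrightarrow>
    (\<Sum>i\<in>I. \<Sum>j\<in>I. P i j * Q i j) \<le> 0"
  using assms
proof (induction I arbitrary: P rule: finite_induct)
  case empty
  then show ?case by simp
next
  case (insert k I)
  note sym = insert.prems(1)
  have kk: "P k k > 0"
  proof -
    have "(\<Sum>i\<in>insert k I. \<Sum>j\<in>insert k I. (if i = k then 1 else 0) * (if j = k then 1 else 0) * P i j) > 0"
      using insert.prems(2)[rule_format, of "\<lambda>i. if i = k then 1 else (0::real)"] by simp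
    moreover have "(\<Sum>i\<in>insert k I. \<Sum>j\<in>insert k I. (if i = k then 1 else 0) * (if j = k then 1 else 0) * P i j) = P k k"
      using insert.hyps by (simp add: sum.neutral)
    ultimately show ?thesis by simp
  qed
  define P' where "P' i j = P i j - P k i * P k j / P k k" for i j
  have symI: "\<forall>i\<in>I. \<forall>j\<in>I. P' i j = P' j i"
  proof (intro ballI)
    fix i j assume ij: "i \<in> I" "j \<in> I"
    then have "P i j = P j i" using sym by blast
    then show "P' i j = P' j i" unfolding P'_def by (simp add: ac_simps)
  qed
  have pdI: "\<forall>v. (\<exists>i\<in>I. v i \<noteq> 0) \<longrightarrow> (\<Sum>i\<in>I. \<Sum>j\<in>I. v i * v j * P' i j) > 0"
  proof (intro allI impI)
    fix v :: "'i \<Rightarrow> real" assume nz: "\<exists>i\<in>I. v i \<noteq> 0"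
    define a where "a = (\<Sum>j\<in>I. P k j * v j)"
    define w where "w = v(k := - a / P k k)"
    have wI: "\<forall>i\<in>I. w i = v i" using insert.hyps by (auto simp: w_def)
    have nzw: "\<exists>i\<in>insert k I. w i \<noteq> 0" using nz wI by auto
    have pos: "(\<Sum>i\<in>insert k I. \<Sum>j\<in>insert k I. w i * w j * P i j) > 0"
      by (rule insert.prems(2)[rule_format, OF nzw])
    have e1: "(\<Sum>i\<in>insert k I. \<Sum>j\<in>insert k I. w i * w j * P i j)
       = w k * w k * P k k + w k * (\<Sum>j\<in>I. w j * P k j) + w k * (\<Sum>i\<in>I. w i * P i k)
         + (\<Sum>i\<in>I. \<Sum>j\<in>I. w i * w j * P i j)"
      using insert.hyps by (simp add: sum.distrib sum_distrib_left algebra_simps)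
    have e2: "(\<Sum>i\<in>I. w i * P i k) = a"
      unfolding a_def using wI sym insert.hyps by (intro sum.cong refl) (metis insertCI mult.commute)
    have e3: "(\<Sum>j\<in>I. w j * P k j) = a"
      unfolding a_def using wI by (intro sum.cong refl) (metis mult.commute)
    have e4: "(\<Sum>i\<in>I. \<Sum>j\<in>I. w i * w j * P i j) = (\<Sum>i\<in>I. \<Sum>j\<in>I. v i * v j * P i j)"
      using wI by (intro sum.cong) auto
    have e5: "(\<Sum>i\<in>I. \<Sum>j\<in>I. v i * v j * P' i j)
        = (\<Sum>i\<in>I. \<Sum>j\<in>I. v i * v j * P i j) - a * a / P k k"
    proof -
      have "(\<Sum>i\<in>I. \<Sum>j\<in>I. v i * v j * P' i j)
         = (\<Sum>i\<in>I. \<Sum>j\<in>I. v i * v j * P i j) - (\<Sum>i\<in>I. \<Sum>j\<in>I. (P k i * v i) * (P k j * v j) / P k k)"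
        unfolding P'_def by (simp add: sum_subtractf algebra_simps)
      also have "(\<Sum>i\<in>I. \<Sum>j\<in>I. (P k i * v i) * (P k j * v j) / P k k) = a * a / P k k"
        unfolding a_def by (simp only: sum_product sum_divide_distrib)
      finally show ?thesis .
    qed
    have wk: "w k = - a / P k k" by (simp add: w_def)
    have "w k * w k * P k k + w k * a + w k * a = - a * a / P k k"
      using kk unfolding wk by (simp add: field_simps)
    moreover have "0 < w k * w k * P k k + w k * a + w k * a + (\<Sum>i\<in>I. \<Sum>j\<in>I. v i * v j * P i j)"
      using pos unfolding e1 e2 e3 e4 .
    ultimately show "(\<Sum>i\<in>I. \<Sum>j\<in>I. v i * v j * P' i j) > 0"
      unfolding e5 by linarith
  qed
  have QI: "\<forall>v. (\<Sum>i\<in>I. \<Sum>j\<in>I. v i * v j * Q i j) \<le> 0"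
  proof
    fix v :: "'i \<Rightarrow> real"
    have "(\<Sum>i\<in>insert k I. \<Sum>j\<in>insert k I. (v(k:=0)) i * (v(k:=0)) j * Q i j) \<le> 0"
      using insert.prems(3) by (erule_tac x="v(k:=0)" in allE)
    moreover have "(\<Sum>i\<in>insert k I. \<Sum>j\<in>insert k I. (v(k:=0)) i * (v(k:=0)) j * Q i j)
       = (\<Sum>i\<in>I. \<Sum>j\<in>I. v i * v j * Q i j)"
      using insert.hyps by (simp, intro sum.cong) auto
    ultimately show "(\<Sum>i\<in>I. \<Sum>j\<in>I. v i * v j * Q i j) \<le> 0" by simp
  qed
  have IH: "(\<Sum>i\<in>I. \<Sum>j\<in>I. P' i j * Q i j) \<le> 0"
    using insert.IH[OF symI pdI QI] .
  have P'k1: "P' k j = 0" for j using kk unfolding P'_def by simp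
  have P'k2: "P' i k = 0" if "i \<in> insert k I" for i
  proof -
    have "P i k = P k i" using sym that by blast
    then show "P' i k = 0" using kk unfolding P'_def by simp
  qed
  have split: "(\<Sum>i\<in>insert k I. \<Sum>j\<in>insert k I. P i j * Q i j)
     = (\<Sum>i\<in>insert k I. \<Sum>j\<in>insert k I. P' i j * Q i j)
       + (\<Sum>i\<in>insert k I. \<Sum>j\<in>insert k I. P k i * P k j * Q i j) / P k k"
  proof -
    have pw: "P i j * Q i j = P' i j * Q i j + P k i * P k j * Q i j / P k k" for i j
      unfolding P'_def using kk by (simp add: field_simps)
    show ?thesis
      by (simp add: pw sum.distrib sum_divide_distrib)
  qed
  have s1: "(\<Sum>i\<in>insert k I. \<Sum>j\<in>insert k I. P' i j * Q i j) = (\<Sum>i\<in>I. \<Sum>j\<in>I. P' i j * Q i j)"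
    using insert.hyps P'k1 P'k2 by simp
  have s2: "(\<Sum>i\<in>insert k I. \<Sum>j\<in>insert k I. P k i * P k j * Q i j) \<le> 0"
    using insert.prems(3) by (erule_tac x="P k" in allE)
  show ?case using split s1 s2 IH kk
    by (smt (verit) divide_nonpos_pos)
qed


lemma bil_suml:
  assumes "bilinear B"
  shows "B (\<Sum>j\<in>S. c j *\<^sub>R u j) k = (\<Sum>j\<in>S. c j * B (u j) k)"
proof -
  interpret l: linear "\<lambda>x. B x y" for y using assms by (simp add: bilinear_def)
  show ?thesis by (simp add: l.sum l.scale)
qed

lemma bil_sumr:
  assumes "bilinear B"
  shows "B k (\<Sum>j\<in>S. c j *\<^sub>R u j) = (\<Sum>j\<in>S. c j * B k (u j))"
proof -
  interpret r: linear "\<lambda>y. B x y" for x using assms by (simp add: bilinear_def)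
  show ?thesis by (simp add: r.sum r.scale)
qed

lemma bil_zero_basis:
  fixes B :: "'v::euclidean_space \<Rightarrow> 'v \<Rightarrow> real"
  assumes "bilinear B" "\<forall>k\<in>Basis. B d k = 0"
  shows "B d d = 0"
proof -
  have "B d d = B d (\<Sum>k\<in>Basis. (d \<bullet> k) *\<^sub>R k)" by (simp add: euclidean_representation)
  also have "\<dots> = (\<Sum>k\<in>Basis. (d \<bullet> k) * B d k)" by (rule bil_sumr[OF assms(1)])
  also have "\<dots> = 0" using assms(2) by simp
  finally show ?thesis .
qed

lemma inv_comp_eq:
  fixes B :: "'v::euclidean_space \<Rightarrow> 'v \<Rightarrow> real"
  assumes bil: "bilinear B" and pd: "\<forall>u. u \<noteq> 0 \<longrightarrow> B u u > 0"
  and Hprop: "(\<forall>i\<in>Basis. \<forall>k\<in>Basis. (\<Sum>j\<in>Basis. H i j * B j k) = (if i = k then 1 else 0))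
                  \<and> (\<forall>i j. i \<notin> Basis \<or> j \<notin> Basis \<longrightarrow> H i j = 0)"
  shows "inv_comp B = H"
proof -
  have uniq: "H' = H" if H': "(\<forall>i\<in>Basis. \<forall>k\<in>Basis. (\<Sum>j\<in>Basis. H' i j * B j k) = (if i = k then 1 else 0))
                  \<and> (\<forall>i j. i \<notin> Basis \<or> j \<notin> Basis \<longrightarrow> H' i j = 0)" for H'
  proof (intro ext)
    fix i j :: 'v
    show "H' i j = H i j"
    proof (cases "i \<in> Basis \<and> j \<in> Basis")
      case False then show ?thesis using H' Hprop by auto
    next
      case True
      define d where "d = (\<Sum>j\<in>Basis. (H' i j - H i j) *\<^sub>R j)"
      have "\<forall>k\<in>Basis. B d k = 0"
      proof
        fix k :: 'v assume k: "k \<in> Basis"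
        have "B d k = (\<Sum>j\<in>Basis. (H' i j - H i j) * B j k)" unfolding d_def by (simp add: bil_suml[OF bil])
        also have "\<dots> = (\<Sum>j\<in>Basis. H' i j * B j k) - (\<Sum>j\<in>Basis. H i j * B j k)"
          by (simp add: left_diff_distrib sum_subtractf)
        also have "\<dots> = 0" using H' Hprop True k by simp
        finally show "B d k = 0" .
      qed
      then have "B d d = 0" by (rule bil_zero_basis[OF bil])
      then have "d = 0" using pd by (metis less_irrefl)
      then have "d \<bullet> j = 0" by simp
      moreover have "d \<bullet> j = H' i j - H i j" unfolding d_def using True
        by (simp add: inner_sum_left inner_Basis if_distrib cong: if_cong)
      ultimately show ?thesis by simp
    qed
  qed
  show ?thesis
    unfolding inv_comp_def
    apply (rule the_equality)
     apply (rule Hprop)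
    apply (erule uniq)
    done
qed

lemma inv_comp_props:
  fixes B :: "'v::euclidean_space \<Rightarrow> 'v \<Rightarrow> real"
  assumes bil: "bilinear B" and sym: "\<forall>u v. B u v = B v u" and pd: "\<forall>u. u \<noteq> 0 \<longrightarrow> B u u > 0"
  shows "\<forall>i\<in>Basis. \<forall>j\<in>Basis. inv_comp B i j = inv_comp B j i"
    and "\<forall>v. (\<exists>i\<in>Basis. v i \<noteq> 0) \<longrightarrow> (\<Sum>i\<in>Basis. \<Sum>j\<in>Basis. v i * v j * inv_comp B i j) > 0"
proof -
  define L where "L u = (\<Sum>k\<in>Basis. B u k *\<^sub>R k)" for u
  interpret l: linear "\<lambda>x. B x y" for y using bil by (simp add: bilinear_def)
  have linL: "linear L"
    unfolding L_def linear_iff by (simp add: bilinear_ladd[OF bil] bilinear_lmul[OF bil] scaleR_add_left sum.distrib scaleR_sum_right)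
  have Lk: "L u \<bullet> k = B u k" if "k \<in> Basis" for u k
    unfolding L_def using that by (simp add: inner_sum_left inner_Basis if_distrib cong: if_cong)
  have uLw: "u \<bullet> L w = B w u" for u w
  proof -
    have "u \<bullet> L w = (\<Sum>k\<in>Basis. B w k * (u \<bullet> k))"
      unfolding L_def by (simp add: inner_sum_right)
    also have "\<dots> = B w (\<Sum>k\<in>Basis. (u \<bullet> k) *\<^sub>R k)"
      by (simp add: bil_sumr[OF bil] mult.commute)
    finally show ?thesis by (simp add: euclidean_representation)
  qed
  have uLu: "u \<bullet> L u = B u u" for u using uLw by simp
  have injL: "inj L"
  proof (rule linear_injective_0[OF linL, THEN iffD2], intro allI impI)
    fix u assume "L u = 0"
    then have "B u u = 0" using uLu by (metis inner_zero_right)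
    then show "u = 0" using pd by (metis less_irrefl)
  qed
  have surjL: "surj L" using linear_inj_imp_surj[OF linL injL] .
  define a where "a i = (SOME x. L x = i)" for i
  have La: "L (a i) = i" for i unfolding a_def using surjL by (metis (mono_tags) someI surjD)
  define H where "H i j = (if i \<in> Basis \<and> j \<in> Basis then a i \<bullet> j else 0)" for i j
  have Hprop: "(\<forall>i\<in>Basis. \<forall>k\<in>Basis. (\<Sum>j\<in>Basis. H i j * B j k) = (if i = k then 1 else 0))
                  \<and> (\<forall>i j. i \<notin> Basis \<or> j \<notin> Basis \<longrightarrow> H i j = 0)"
  proof (intro conjI ballI allI impI)
    fix i k :: 'v assume ik: "i \<in> Basis" "k \<in> Basis"
    have "(\<Sum>j\<in>Basis. H i j * B j k) = (\<Sum>j\<in>Basis. (a i \<bullet> j) * B j k)"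
      using ik by (intro sum.cong) (auto simp: H_def)
    also have "\<dots> = B (\<Sum>j\<in>Basis. (a i \<bullet> j) *\<^sub>R j) k" by (simp add: bil_suml[OF bil])
    also have "\<dots> = B (a i) k" by (simp add: euclidean_representation)
    also have "\<dots> = i \<bullet> k" using Lk[OF ik(2), of "a i"] La[of i] by simp
    finally show "(\<Sum>j\<in>Basis. H i j * B j k) = (if i = k then 1 else 0)" using ik by (simp add: inner_Basis)
  next
    fix i j :: 'v assume "i \<notin> Basis \<or> j \<notin> Basis" then show "H i j = 0" by (auto simp: H_def)
  qed
  have uniq: "H' = H" if H': "(\<forall>i\<in>Basis. \<forall>k\<in>Basis. (\<Sum>j\<in>Basis. H' i j * B j k) = (if i = k then 1 else 0))
                  \<and> (\<forall>i j. i \<notin> Basis \<or> j \<notin> Basis \<longrightarrow> H' i j = 0)" for H'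
  proof (intro ext)
    fix i j :: 'v
    show "H' i j = H i j"
    proof (cases "i \<in> Basis \<and> j \<in> Basis")
      case False then show ?thesis using H' Hprop by auto
    next
      case True
      define d where "d = (\<Sum>j\<in>Basis. (H' i j - H i j) *\<^sub>R j)"
      have "\<forall>k\<in>Basis. B d k = 0"
      proof
        fix k :: 'v assume k: "k \<in> Basis"
        have "B d k = (\<Sum>j\<in>Basis. (H' i j - H i j) * B j k)" unfolding d_def by (simp add: bil_suml[OF bil])
        also have "\<dots> = (\<Sum>j\<in>Basis. H' i j * B j k) - (\<Sum>j\<in>Basis. H i j * B j k)"
          by (simp add: left_diff_distrib sum_subtractf)
        also have "\<dots> = 0" using H' Hprop True k by simp
        finally show "B d k = 0" .
      qed
      then have "B d d = 0" by (rule bil_zero_basis[OF bil])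
      then have "d = 0" using pd by (metis less_irrefl)
      then have "d \<bullet> j = 0" by simp
      moreover have "d \<bullet> j = H' i j - H i j" unfolding d_def using True
        by (simp add: inner_sum_left inner_Basis if_distrib cong: if_cong)
      ultimately show ?thesis by simp
    qed
  qed
  have ic: "inv_comp B = H"
    unfolding inv_comp_def
    apply (rule the_equality)
     apply (rule Hprop)
    apply (erule uniq)
    done
  show "\<forall>i\<in>Basis. \<forall>j\<in>Basis. inv_comp B i j = inv_comp B j i"
  proof (intro ballI)
    fix i j :: 'v assume "i \<in> Basis" "j \<in> Basis"
    assume ij: "i \<in> Basis" "j \<in> Basis"
    have "B (a i) (a j) = B (a j) (a i)" using sym by simp
    moreover have "B (a j) (a i) = a i \<bullet> j" using uLw[of "a i" "a j"] La by simp
    moreover have "B (a i) (a j) = a j \<bullet> i" using uLw[of "a j" "a i"] La by simp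
    ultimately show "inv_comp B i j = inv_comp B j i" using ij by (simp add: ic H_def)
  qed
  show "\<forall>v. (\<exists>i\<in>Basis. v i \<noteq> 0) \<longrightarrow> (\<Sum>i\<in>Basis. \<Sum>j\<in>Basis. v i * v j * inv_comp B i j) > 0"
  proof (intro allI impI)
    fix v :: "'v \<Rightarrow> real" assume nz: "\<exists>i\<in>Basis. v i \<noteq> 0"
    define A where "A = (\<Sum>i\<in>Basis. v i *\<^sub>R a i)"
    define w where "w = (\<Sum>j\<in>Basis. v j *\<^sub>R j)"
    have "(\<Sum>i\<in>Basis. \<Sum>j\<in>Basis. v i * v j * inv_comp B i j) = (\<Sum>i\<in>Basis. \<Sum>j\<in>Basis. v i * v j * (a i \<bullet> j))"
      by (intro sum.cong) (auto simp: ic H_def)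
    also have "\<dots> = A \<bullet> w"
      unfolding A_def w_def
      by (simp add: inner_sum_left inner_sum_right sum_distrib_left mult.assoc, subst sum.swap) (simp add: algebra_simps)
    finally have e: "(\<Sum>i\<in>Basis. \<Sum>j\<in>Basis. v i * v j * inv_comp B i j) = A \<bullet> w" .
    have LA: "L A = w" unfolding A_def w_def
      using linL La by (simp add: linear_sum linear_scale comp_def)
    have "A \<noteq> 0"
    proof
      assume "A = 0"
      then have "w = 0" using LA linear_0[OF linL] by simp
      moreover obtain i where "i \<in> Basis" "v i \<noteq> 0" using nz by blast
      moreover have "w \<bullet> i = v i" unfolding w_def using \<open>i \<in> Basis\<close>
        by (simp add: inner_sum_left inner_Basis if_distrib cong: if_cong)
      ultimately show False by simp
    qed
    then show "(\<Sum>i\<in>Basis. \<Sum>j\<in>Basis. v i * v j * inv_comp B i j) > 0"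
      using e LA uLu pd by metis
  qed
qed


lemma rho_alt: "rho y = 1/2 + inverse (2 * (y \<bullet> y)^2)"
proof -
  have "norm y ^ 4 = (norm y ^ 2) ^ 2" by (simp flip: power_mult)
  also have "\<dots> = (y \<bullet> y) ^ 2" by (simp only: power2_norm_eq_inner)
  finally have e: "norm y ^ 4 = (y \<bullet> y) ^ 2" .
  show ?thesis unfolding rho_def e by (simp only: divide_inverse mult_1_left)
qed

lemma rho_deriv:
  fixes y :: "'e::euclidean_space"
  assumes "y \<noteq> 0"
  shows "(rho has_derivative (\<lambda>h. -2 * (y \<bullet> h) / (y \<bullet> y)^3)) (at y)"
proof -
  have yy: "y \<bullet> y \<noteq> 0" using assms by simp
  have "((\<lambda>y::'e. 1/2 + inverse (2 * (y \<bullet> y)^2)) has_derivative (\<lambda>h. -2 * (y \<bullet> h) / (y \<bullet> y)^3)) (at y)"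
    using yy apply (auto intro!: derivative_eq_intros)
    apply (rule ext)
    apply (simp add: inner_commute field_simps power2_eq_square power3_eq_cube)
    done
  then show ?thesis unfolding rho_alt[abs_def] by simp
qed

lemma rho_pos: "rho y > 0"
  unfolding rho_def by (simp add: add_pos_nonneg)

lemma inv_comp_G:
  fixes y :: "'e::euclidean_space"
  shows "inv_comp (Gmetric y) = (\<lambda>i j. if i \<in> Basis \<and> j \<in> Basis \<and> i = j then 1 / rho y else 0)"
proof (rule inv_comp_eq)
  have r: "rho y > 0" by (rule rho_pos)
  show "bilinear (Gmetric y)"
    unfolding bilinear_def Gmetric_def linear_iff by (simp add: inner_add_left inner_add_right algebra_simps)
  show "\<forall>u. u \<noteq> 0 \<longrightarrow> Gmetric y u u > 0"
    unfolding Gmetric_def using r by simp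
  show "(\<forall>i\<in>Basis. \<forall>k\<in>Basis. (\<Sum>j\<in>Basis. (if i \<in> Basis \<and> j \<in> Basis \<and> i = j then 1 / rho y else 0) * Gmetric y j k) = (if i = k then 1 else 0))
                  \<and> (\<forall>i j::'e. i \<notin> Basis \<or> j \<notin> Basis \<longrightarrow> (if i \<in> Basis \<and> j \<in> Basis \<and> i = j then 1 / rho y else 0) = 0)"
  proof (intro conjI ballI allI impI)
    fix i k :: 'e assume ik: "i \<in> Basis" "k \<in> Basis"
    have "(\<Sum>j\<in>Basis. (if i \<in> Basis \<and> j \<in> Basis \<and> i = j then 1 / rho y else 0) * Gmetric y j k)
        = (\<Sum>j\<in>Basis. if i = j then 1 / rho y * Gmetric y i k else 0)"
      using ik by (intro sum.cong) auto
    also have "\<dots> = 1 / rho y * Gmetric y i k" using ik by simp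
    also have "\<dots> = (if i = k then 1 else 0)" using r ik by (simp add: Gmetric_def inner_Basis)
    finally show "(\<Sum>j\<in>Basis. (if i \<in> Basis \<and> j \<in> Basis \<and> i = j then 1 / rho y else 0) * Gmetric y j k) = (if i = k then 1 else 0)" .
  next
    fix i j :: 'e assume "i \<notin> Basis \<or> j \<notin> Basis"
    then show "(if i \<in> Basis \<and> j \<in> Basis \<and> i = j then 1 / rho y else 0) = 0" by auto
  qed
qed

lemma sum_delta_basis:
  fixes \<alpha> :: "'e::euclidean_space" and c :: real and X :: "'e \<Rightarrow> real"
  assumes "\<alpha> \<in> Basis"
  shows "(\<Sum>k\<in>Basis. (if \<alpha> \<in> Basis \<and> k \<in> Basis \<and> \<alpha> = k then c else 0) * X k) = c * X \<alpha>"
proof -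
  have "(\<Sum>k\<in>Basis. (if \<alpha> \<in> Basis \<and> k \<in> Basis \<and> \<alpha> = k then c else 0) * X k) = (\<Sum>k\<in>Basis. if \<alpha> = k then c * X k else 0)"
    using assms by (intro sum.cong) auto
  also have "\<dots> = c * X \<alpha>" using assms by (simp add: sum.delta)
  finally show ?thesis .
qed

lemma pd_G:
  fixes y :: "'e::euclidean_space"
  assumes "y \<noteq> 0"
  shows "pd (\<lambda>z. Gmetric z u v) w y = (u \<bullet> v) * (-2 * (y \<bullet> w) / (y \<bullet> y)^3)"
proof -
  have "((\<lambda>z. Gmetric z u v) has_derivative (\<lambda>h. (-2 * (y \<bullet> h) / (y \<bullet> y)^3) * (u \<bullet> v))) (at y)"
    unfolding Gmetric_def by (rule has_derivative_mult_left[OF rho_deriv[OF assms]])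
  then show ?thesis unfolding pd_def by (simp add: frechet_derivative_at[symmetric])
qed

lemma christ_G:
  fixes y :: "'e::euclidean_space"
  assumes "y \<noteq> 0" "\<alpha> \<in> Basis"
  shows "christoffel Gmetric y \<alpha> \<beta> \<gamma> = (-2 / (y \<bullet> y)^3) / (2 * rho y) *
     ((\<gamma> \<bullet> \<alpha>) * (y \<bullet> \<beta>) + (\<beta> \<bullet> \<alpha>) * (y \<bullet> \<gamma>) - (\<beta> \<bullet> \<gamma>) * (y \<bullet> \<alpha>))"
  unfolding christoffel_def inv_comp_G pd_G[OF assms(1)] sum_delta_basis[OF assms(2)]
  using rho_pos[of y] assms(1) by (simp add: divide_simps)

lemma sum_inner_basis: "(\<Sum>g\<in>Basis. (u \<bullet> g) * (v \<bullet> g)) = u \<bullet> v"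
  by (rule euclidean_inner[symmetric])

lemma christ_sum:
  fixes y a b :: "'e::euclidean_space"
  assumes y: "y \<noteq> 0" and ay: "a \<bullet> y = 0" and "b \<bullet> y = 0"
  shows "(\<Sum>\<alpha>\<in>Basis. (\<Sum>\<beta>\<in>Basis. \<Sum>\<gamma>\<in>Basis. christoffel Gmetric y \<alpha> \<beta> \<gamma> * (a \<bullet> \<beta>) * (b \<bullet> \<gamma>)) * (y \<bullet> \<alpha>))
     = 2 * (a \<bullet> b) / ((y \<bullet> y)^2 + 1)"
proof -
  define k where "k = (-2 / (y \<bullet> y)^3) / (2 * rho y)"
  have by0: "y \<bullet> b = 0" using assms by (simp add: inner_commute)
  have s1: "(\<Sum>\<gamma>\<in>Basis. christoffel Gmetric y \<alpha> \<beta> \<gamma> * (a \<bullet> \<beta>) * (b \<bullet> \<gamma>))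
     = k * (a \<bullet> \<beta>) * ((y \<bullet> \<beta>) * (b \<bullet> \<alpha>) - (b \<bullet> \<beta>) * (y \<bullet> \<alpha>))" if "\<alpha> \<in> Basis" for \<alpha> \<beta>
  proof -
    have pw: "christoffel Gmetric y \<alpha> \<beta> \<gamma> * (a \<bullet> \<beta>) * (b \<bullet> \<gamma>)
       = (k * (a \<bullet> \<beta>)) * ((y \<bullet> \<beta>) * ((b \<bullet> \<gamma>) * (\<alpha> \<bullet> \<gamma>))
          + (\<beta> \<bullet> \<alpha>) * ((b \<bullet> \<gamma>) * (y \<bullet> \<gamma>)) - (y \<bullet> \<alpha>) * ((b \<bullet> \<gamma>) * (\<beta> \<bullet> \<gamma>)))" for \<gamma>
      unfolding christ_G[OF y that] k_def[symmetric] by (simp add: algebra_simps inner_commute)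
    have "(\<Sum>\<gamma>\<in>Basis. christoffel Gmetric y \<alpha> \<beta> \<gamma> * (a \<bullet> \<beta>) * (b \<bullet> \<gamma>))
      = (k * (a \<bullet> \<beta>)) * (\<Sum>\<gamma>\<in>Basis. (y \<bullet> \<beta>) * ((b \<bullet> \<gamma>) * (\<alpha> \<bullet> \<gamma>))
          + (\<beta> \<bullet> \<alpha>) * ((b \<bullet> \<gamma>) * (y \<bullet> \<gamma>)) - (y \<bullet> \<alpha>) * ((b \<bullet> \<gamma>) * (\<beta> \<bullet> \<gamma>)))"
      unfolding pw by (simp only: sum_distrib_left)
    also have "\<dots> = (k * (a \<bullet> \<beta>)) * ((y \<bullet> \<beta>) * (\<Sum>g\<in>Basis. (b \<bullet> g) * (\<alpha> \<bullet> g))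
          + (\<beta> \<bullet> \<alpha>) * (\<Sum>g\<in>Basis. (b \<bullet> g) * (y \<bullet> g))
          - (y \<bullet> \<alpha>) * (\<Sum>g\<in>Basis. (b \<bullet> g) * (\<beta> \<bullet> g)))"
      by (simp only: sum.distrib sum_subtractf sum_distrib_left)
    also have "\<dots> = (k * (a \<bullet> \<beta>)) * ((y \<bullet> \<beta>) * (b \<bullet> \<alpha>) + (\<beta> \<bullet> \<alpha>) * (b \<bullet> y) - (y \<bullet> \<alpha>) * (b \<bullet> \<beta>))"
      by (simp only: sum_inner_basis)
    finally show ?thesis using assms(3) by simp
  qed
  have s2: "(\<Sum>\<beta>\<in>Basis. \<Sum>\<gamma>\<in>Basis. christoffel Gmetric y \<alpha> \<beta> \<gamma> * (a \<bullet> \<beta>) * (b \<bullet> \<gamma>))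
     = - k * (a \<bullet> b) * (y \<bullet> \<alpha>)" if "\<alpha> \<in> Basis" for \<alpha>
  proof -
    have "(\<Sum>\<beta>\<in>Basis. \<Sum>\<gamma>\<in>Basis. christoffel Gmetric y \<alpha> \<beta> \<gamma> * (a \<bullet> \<beta>) * (b \<bullet> \<gamma>))
      = k * ((b \<bullet> \<alpha>) * (\<Sum>g\<in>Basis. (a \<bullet> g) * (y \<bullet> g)) - (y \<bullet> \<alpha>) * (\<Sum>g\<in>Basis. (a \<bullet> g) * (b \<bullet> g)))"
      apply (simp only: s1[OF that])
      apply (simp add: sum_distrib_left sum_subtractf algebra_simps)
      done
    then show ?thesis by (simp add: sum_inner_basis ay)
  qed
  have "(\<Sum>\<alpha>\<in>Basis. (\<Sum>\<beta>\<in>Basis. \<Sum>\<gamma>\<in>Basis. christoffel Gmetric y \<alpha> \<beta> \<gamma> * (a \<bullet> \<beta>) * (b \<bullet> \<gamma>)) * (y \<bullet> \<alpha>))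
     = (\<Sum>\<alpha>\<in>Basis. (- k * (a \<bullet> b) * (y \<bullet> \<alpha>)) * (y \<bullet> \<alpha>))"
    by (intro sum.cong refl) (simp only: s2)
  also have "\<dots> = - k * (a \<bullet> b) * (\<Sum>g\<in>Basis. (y \<bullet> g) * (y \<bullet> g))"
    by (simp add: sum_distrib_left algebra_simps)
  also have "\<dots> = - k * (a \<bullet> b) * (y \<bullet> y)" by (simp add: sum_inner_basis)
  also have "\<dots> = 2 * (a \<bullet> b) / ((y \<bullet> y)^2 + 1)"
  proof -
    have yy: "y \<bullet> y > 0" using y by simp
    have "rho y = ((y \<bullet> y)^2 + 1) / (2 * (y \<bullet> y)^2)" unfolding rho_alt using yy
      by (simp add: field_simps)
    moreover have "y \<bullet> y + y \<bullet> y * (y \<bullet> y * (y \<bullet> y)) > 0" "1 + y \<bullet> y * (y \<bullet> y) > 0"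
      using yy by (simp_all add: add_pos_pos)
    ultimately show ?thesis unfolding k_def using yy
      by (simp add: field_simps power2_eq_square power3_eq_cube)
  qed
  finally show ?thesis .
qed


lemma lin_basis_expand:
  fixes L :: "'d::euclidean_space \<Rightarrow> 'w::real_vector"
  assumes "linear L"
  shows "L (\<Sum>i\<in>Basis. v i *\<^sub>R i) = (\<Sum>i\<in>Basis. v i *\<^sub>R L i)"
  using assms by (simp add: linear_sum linear_scale comp_def)

lemma local_max_2nd:
  fixes F :: "'d::euclidean_space \<Rightarrow> 'e::euclidean_space" and \<sigma> :: real
  assumes V: "open V" "x0 \<in> V"
    and dF: "\<forall>x\<in>V. F differentiable (at x)"
    and d2F: "\<forall>j\<in>Basis. (pd F j) differentiable (at x0)"
    and sg: "\<sigma> \<noteq> 0"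
    and mx: "\<forall>x\<in>V. \<sigma> * (F x \<bullet> F x) \<le> \<sigma> * (F x0 \<bullet> F x0)"
  shows "\<forall>l\<in>Basis. F x0 \<bullet> pd F l x0 = 0"
    and "\<forall>v. \<sigma> * (\<Sum>i\<in>Basis. \<Sum>j\<in>Basis. v i * v j * (pd F i x0 \<bullet> pd F j x0 + F x0 \<bullet> pd (pd F j) i x0)) \<le> 0"
proof -
  define DF where "DF x = frechet_derivative F (at x)" for x
  have hasDF: "(F has_derivative DF x) (at x)" if "x \<in> V" for x
    using dF that unfolding DF_def by (simp add: frechet_derivative_works[symmetric])
  have linDF: "linear (DF x)" if "x \<in> V" for x
    using hasDF[OF that] by (rule has_derivative_linear)
  define u where "u x = \<sigma> * (F x \<bullet> F x)" for x
  have hasu: "(u has_derivative (\<lambda>k. \<sigma> * (2 * (F x \<bullet> DF x k)))) (at x)" if "x \<in> V" for x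
  proof -
    have "(u has_derivative (\<lambda>k. \<sigma> * (F x \<bullet> DF x k + DF x k \<bullet> F x))) (at x)"
      unfolding u_def
      by (intro has_derivative_mult_right has_derivative_inner hasDF[OF that])
    then show ?thesis by (simp add: inner_commute)
  qed
  have evmax: "eventually (\<lambda>y. u y \<le> u x0) (at x0)"
    unfolding eventually_at_topological
    by (rule exI[of _ V]) (use V mx in \<open>simp add: u_def\<close>)
  have crit: "(\<lambda>k. \<sigma> * (2 * (F x0 \<bullet> DF x0 k))) = (\<lambda>h. 0)"
    by (rule has_derivative_local_max[OF hasu[OF V(2)] evmax])
  have critk: "F x0 \<bullet> DF x0 k = 0" for k
    using fun_cong[OF crit, of k] sg by simp
  show "\<forall>l\<in>Basis. F x0 \<bullet> pd F l x0 = 0"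
    using critk unfolding pd_def DF_def by simp
  show "\<forall>v. \<sigma> * (\<Sum>i\<in>Basis. \<Sum>j\<in>Basis. v i * v j * (pd F i x0 \<bullet> pd F j x0 + F x0 \<bullet> pd (pd F j) i x0)) \<le> 0"
  proof
    fix v :: "'d \<Rightarrow> real"
    show "\<sigma> * (\<Sum>i\<in>Basis. \<Sum>j\<in>Basis. v i * v j * (pd F i x0 \<bullet> pd F j x0 + F x0 \<bullet> pd (pd F j) i x0)) \<le> 0"
    proof -
    define e where "e = (\<Sum>i\<in>Basis. v i *\<^sub>R i)"
    have ei: "e \<bullet> i = v i" if "i \<in> Basis" for i
      unfolding e_def using that by (simp add: inner_sum_left inner_Basis if_distrib cong: if_cong)
    define W where "W x = (\<Sum>j\<in>Basis. v j *\<^sub>R pd F j x)" for x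
    have DFe: "DF x e = W x" if "x \<in> V" for x
      using lin_basis_expand[OF linDF[OF that], of v] unfolding e_def W_def pd_def DF_def by simp
    define W' where "W' = (\<lambda>k. \<Sum>j\<in>Basis. v j *\<^sub>R frechet_derivative (pd F j) (at x0) k)"
    have hasW: "(W has_derivative W') (at x0)"
      unfolding W_def W'_def
      by (intro has_derivative_sum has_derivative_scaleR_right)
         (use d2F in \<open>simp add: frechet_derivative_works[symmetric]\<close>)
    define g2 where "g2 = 2 * \<sigma> * (DF x0 e \<bullet> DF x0 e + F x0 \<bullet> W' e)"
    have g2eq: "g2 = 2 * (\<sigma> * (\<Sum>i\<in>Basis. \<Sum>j\<in>Basis. v i * v j * (pd F i x0 \<bullet> pd F j x0 + F x0 \<bullet> pd (pd F j) i x0)))"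
    proof -
      have a1: "DF x0 e \<bullet> DF x0 e = (\<Sum>i\<in>Basis. \<Sum>j\<in>Basis. v i * v j * (pd F i x0 \<bullet> pd F j x0))"
        unfolding DFe[OF V(2)] W_def
        by (simp add: inner_sum_left inner_sum_right sum_distrib_left mult.assoc, subst sum.swap, simp add: algebra_simps)
      have W'e: "frechet_derivative (pd F j) (at x0) e = (\<Sum>i\<in>Basis. v i *\<^sub>R pd (pd F j) i x0)" if "j \<in> Basis" for j
        unfolding e_def using d2F that
        by (simp add: lin_basis_expand[OF linear_frechet_derivative] pd_def)
      have a2: "F x0 \<bullet> W' e = (\<Sum>i\<in>Basis. \<Sum>j\<in>Basis. v i * v j * (F x0 \<bullet> pd (pd F j) i x0))"
      proof -
        have "F x0 \<bullet> W' e = (\<Sum>j\<in>Basis. \<Sum>i\<in>Basis. v j * (v i * (F x0 \<bullet> pd (pd F j) i x0)))"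
          unfolding W'_def by (simp add: W'e inner_sum_right sum_distrib_left)
        also have "\<dots> = (\<Sum>i\<in>Basis. \<Sum>j\<in>Basis. v j * (v i * (F x0 \<bullet> pd (pd F j) i x0)))"
          by (rule sum.swap)
        finally show ?thesis by (simp add: algebra_simps)
      qed
      show ?thesis unfolding g2_def a1 a2
        by (simp add: sum.distrib[symmetric] algebra_simps)
    qed
    show ?thesis
    proof (cases "e = 0")
      case True
      then have "\<forall>i\<in>Basis. v i = 0" using ei by auto
      then show ?thesis by simp
    next
      case False
      then have ne: "norm e > 0" by simp
      obtain r where r: "r > 0" "ball x0 r \<subseteq> V" using V open_contains_ball by blast
      define d0 where "d0 = r / norm e"
      have d0: "d0 > 0" unfolding d0_def using r ne by simp
      have inV: "x0 + s *\<^sub>R e \<in> V" if "\<bar>s\<bar> < d0" for s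
      proof -
        have "norm (s *\<^sub>R e) < r" using that ne unfolding d0_def by (simp add: pos_less_divide_eq)
        then show ?thesis using r by (auto simp: dist_norm)
      qed
      define g where "g s = 2 * \<sigma> * (F (x0 + s *\<^sub>R e) \<bullet> W (x0 + s *\<^sub>R e))" for s
      define H where "H s = u (x0 + s *\<^sub>R e)" for s
      have hasH: "(H has_real_derivative g s) (at s)" if "\<bar>s\<bar> < d0" for s
      proof -
        have l: "((\<lambda>s. x0 + s *\<^sub>R e) has_derivative (\<lambda>t. t *\<^sub>R e)) (at s)"
          by (auto intro!: derivative_eq_intros)
        have "(H has_derivative (\<lambda>t. \<sigma> * (2 * (F (x0 + s *\<^sub>R e) \<bullet> DF (x0 + s *\<^sub>R e) (t *\<^sub>R e))))) (at s)"
          unfolding H_def by (rule has_derivative_compose[OF l hasu[OF inV[OF that]]])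
        moreover have "(\<lambda>t. \<sigma> * (2 * (F (x0 + s *\<^sub>R e) \<bullet> DF (x0 + s *\<^sub>R e) (t *\<^sub>R e)))) = (*) (g s)"
          using linear_scale[OF linDF[OF inV[OF that]]] DFe[OF inV[OF that]]
          by (auto simp: g_def fun_eq_iff algebra_simps)
        ultimately show ?thesis by (simp add: has_field_derivative_def)
      qed
      have hasg: "(g has_real_derivative g2) (at 0)"
      proof -
        have l: "((\<lambda>s. x0 + s *\<^sub>R e) has_derivative (\<lambda>t. t *\<^sub>R e)) (at 0)"
          by (auto intro!: derivative_eq_intros)
        have f1: "((\<lambda>s. F (x0 + s *\<^sub>R e)) has_derivative (\<lambda>t. DF x0 (t *\<^sub>R e))) (at 0)"
          using has_derivative_compose[OF l, of F "DF x0"] hasDF[OF V(2)] by simp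
        have f2: "((\<lambda>s. W (x0 + s *\<^sub>R e)) has_derivative (\<lambda>t. W' (t *\<^sub>R e))) (at 0)"
          using has_derivative_compose[OF l, of W W'] hasW by simp
        have "(g has_derivative (\<lambda>t. 2 * \<sigma> * (F x0 \<bullet> W' (t *\<^sub>R e) + DF x0 (t *\<^sub>R e) \<bullet> W x0))) (at 0)"
          unfolding g_def using has_derivative_mult_right[OF has_derivative_inner[OF f1 f2], of "2 * \<sigma>"] by simp
        moreover have "(\<lambda>t. 2 * \<sigma> * (F x0 \<bullet> W' (t *\<^sub>R e) + DF x0 (t *\<^sub>R e) \<bullet> W x0)) = (*) g2"
          using linear_scale[OF linDF[OF V(2)]] linear_scale[OF has_derivative_linear[OF hasW]] DFe[OF V(2)]
          by (auto simp: g2_def fun_eq_iff algebra_simps)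
        ultimately show ?thesis by (simp add: has_field_derivative_def)
      qed
      have g0: "g 0 = 0" unfolding g_def using critk[of e] DFe[OF V(2)] by simp
      have "g2 \<le> 0"
      proof (rule ccontr)
        assume "\<not> g2 \<le> 0"
        then obtain d where d: "d > 0" "\<forall>h>0. h < d \<longrightarrow> g 0 < g (0 + h)"
          using DERIV_pos_inc_right[OF hasg] by force
        define s where "s = min d d0 / 2"
        have s: "s > 0" "s < d" "s < d0" using d d0 by (auto simp: s_def)
        have "H 0 < H s"
        proof (rule DERIV_pos_imp_increasing_open[OF s(1)])
          fix x assume x: "0 < x" "x < s"
          show "\<exists>y. DERIV H x :> y \<and> y > 0"
            using hasH[of x] d(2)[rule_format, of x] x s g0 by auto
        next
          show "continuous_on {0..s} H"
          proof (intro continuous_at_imp_continuous_on ballI)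
            fix x assume "x \<in> {0..s}"
            then have "\<bar>x\<bar> < d0" using s by auto
            then show "isCont H x" using hasH by (blast intro: DERIV_isCont)
          qed
        qed
        moreover have "H s \<le> H 0" unfolding H_def u_def using mx inV[of s] s by simp
        ultimately show False by simp
      qed
      then show ?thesis using g2eq by simp
    qed
    qed
  qed
qed

lemma chart_reg:
  fixes A :: "('a::t2_space set \<times> ('a \<Rightarrow> 'd::euclidean_space) \<times> ('d \<Rightarrow> 'a)) set"
    and f :: "'a \<Rightarrow> real \<Rightarrow> 'e::euclidean_space"
  assumes sol: "ehmhf_solution A M T f" and openU: "open (\<phi> ` U)"
    and ch: "(U, \<phi>, \<psi>) \<in> A" and x0: "x0 \<in> \<phi> ` U" and t0: "t0 \<in> {0..<T}"
  shows "\<exists>N. open N \<and> x0 \<in> N \<and> N \<subseteq> \<phi> ` U \<and> (\<forall>x\<in>N. (\<lambda>x. f (\<psi> x) t0) differentiable (at x))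
     \<and> (\<forall>j\<in>Basis. pd (\<lambda>x. f (\<psi> x) t0) j differentiable (at x0))"
proof -
  define F where "F x = f (\<psi> x) t0" for x
  have ss: "smooth_set (\<phi> ` U \<times> {0..<T}) (\<lambda>(x, t). f (\<psi> x) t)"
    using sol ch unfolding ehmhf_solution_def by blast
  obtain W g where W: "open W" "(x0, t0) \<in> W" "smooth_open W g"
    and gW: "\<forall>q\<in>W \<inter> (\<phi> ` U \<times> {0..<T}). g q = (\<lambda>(x, t). f (\<psi> x) t) q"
    using ss x0 t0 unfolding smooth_set_def by blast
  have C2: "Ck (Suc (Suc 0)) W g" using W(3) unfolding smooth_open_def by blast
  have gd: "\<forall>z\<in>W. g differentiable (at z)" using C2 by simp
  have g1d: "\<forall>b\<in>Basis. \<forall>z\<in>W. (\<lambda>z. frechet_derivative g (at z) b) differentiable (at z)"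
    using C2 by simp
  obtain e where e: "e > 0" "ball (x0, t0) e \<subseteq> W" using W openE by blast
  define N where "N = ball x0 e \<inter> \<phi> ` U"
  have oN: "open N" unfolding N_def using openU by auto
  have x0N: "x0 \<in> N" unfolding N_def using e x0 by simp
  have inW: "(x, t0) \<in> W" if "x \<in> N" for x
  proof -
    have "dist (x0, t0) (x, t0) = dist x0 x" by (simp add: dist_Pair_Pair)
    then show ?thesis using that e unfolding N_def by auto
  qed
  have FG: "F x = g (x, t0)" if "x \<in> N" for x
    using gW inW[OF that] that t0 unfolding N_def F_def by auto
  have pair: "((\<lambda>x. (x, t0)) has_derivative (\<lambda>h. (h, 0))) (at x)" for x :: 'd
    by (auto intro!: derivative_eq_intros)
  have hasF: "(F has_derivative (\<lambda>h. frechet_derivative g (at (x, t0)) (h, 0))) (at x)" if "x \<in> N" for x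
  proof -
    have "(g has_derivative frechet_derivative g (at (x, t0))) (at (x, t0))"
      using gd inW[OF that] by (simp add: frechet_derivative_works[symmetric])
    then have "((\<lambda>x. g (x, t0)) has_derivative (\<lambda>h. frechet_derivative g (at (x, t0)) (h, 0))) (at x)"
      using has_derivative_compose[OF pair] by blast
    then show ?thesis
      by (rule has_derivative_transform_within_open[OF _ oN that]) (simp add: FG)
  qed
  have pdF: "pd F j x = frechet_derivative g (at (x, t0)) (j, 0)" if "x \<in> N" for x j
    unfolding pd_def frechet_derivative_at[OF hasF[OF that], symmetric] by simp
  have d2: "pd F j differentiable (at x0)" if j: "j \<in> Basis" for j
  proof -
    have jb: "(j, 0::real) \<in> Basis" using j by (simp add: Basis_prod_def)
    have "(\<lambda>z. frechet_derivative g (at z) (j, 0)) differentiable (at (x0, t0))"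
      using g1d jb W(2) by blast
    then obtain D where D: "((\<lambda>z. frechet_derivative g (at z) (j, 0)) has_derivative D) (at (x0, t0))"
      unfolding differentiable_def by blast
    have "((\<lambda>x. frechet_derivative g (at (x, t0)) (j, 0)) has_derivative (\<lambda>h. D (h, 0))) (at x0)"
      using has_derivative_compose[OF pair D] by simp
    then have "(pd F j has_derivative (\<lambda>h. D (h, 0))) (at x0)"
      by (rule has_derivative_transform_within_open[OF _ oN x0N]) (simp add: pdF)
    then show ?thesis unfolding differentiable_def by blast
  qed
  have dF: "\<forall>x\<in>N. F differentiable (at x)" using hasF unfolding differentiable_def by blast
  have NU: "N \<subseteq> \<phi> ` U" unfolding N_def by blast
  show ?thesis
    using oN x0N d2 dF NU unfolding F_def[abs_def] by blast
qed

lemma psd_of_pd: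
  fixes P :: "'v \<Rightarrow> 'v \<Rightarrow> real"
  assumes "\<forall>v. (\<exists>i\<in>B. v i \<noteq> 0) \<longrightarrow> (\<Sum>i\<in>B. \<Sum>j\<in>B. v i * v j * P i j) > 0"
  shows "(\<Sum>i\<in>B. \<Sum>j\<in>B. v i * v j * P i j) \<ge> 0"
proof (cases "\<exists>i\<in>B. v i \<noteq> 0")
  case True then show ?thesis using assms by (meson less_imp_le)
next
  case False then show ?thesis by simp
qed

lemma cr_parts:
  fixes A :: "('a::t2_space set \<times> ('a \<Rightarrow> 'd::euclidean_space) \<times> ('d \<Rightarrow> 'a)) set"
    and M :: "('a set \<times> ('a \<Rightarrow> 'd) \<times> ('d \<Rightarrow> 'a)) \<Rightarrow> 'd \<Rightarrow> 'd \<Rightarrow> 'd \<Rightarrow> real"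
  assumes "closed_riemannian A M"
  shows "compact (UNIV :: 'a set)"
    and "\<forall>U \<phi> \<psi>. (U, \<phi>, \<psi>) \<in> A \<longrightarrow> open U \<and> open (\<phi> ` U) \<and> homeomorphism U (\<phi> ` U) \<phi> \<psi>"
    and "\<forall>p. \<exists>U \<phi> \<psi>. (U, \<phi>, \<psi>) \<in> A \<and> p \<in> U"
    and "\<forall>U \<phi> \<psi>. (U, \<phi>, \<psi>) \<in> A \<longrightarrow>
        (\<forall>x\<in>\<phi> ` U. bilinear (M (U, \<phi>, \<psi>) x) \<and> (\<forall>u v. M (U, \<phi>, \<psi>) x u v = M (U, \<phi>, \<psi>) x v u)
                    \<and> (\<forall>u. u \<noteq> 0 \<longrightarrow> M (U, \<phi>, \<psi>) x u u > 0)) \<and>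
        (\<forall>i\<in>Basis. \<forall>j\<in>Basis. smooth_set (\<phi> ` U) (\<lambda>x. M (U, \<phi>, \<psi>) x i j))"
  using assms unfolding closed_riemannian_def
  apply -
     apply (elim conjE, assumption)
    apply (elim conjE, assumption)
   apply (elim conjE, assumption)
  apply (elim conjE, assumption)
  done

lemma pointwise:
  fixes A :: "('a::t2_space set \<times> ('a \<Rightarrow> 'd::euclidean_space) \<times> ('d \<Rightarrow> 'a)) set"
    and M :: "('a set \<times> ('a \<Rightarrow> 'd) \<times> ('d \<Rightarrow> 'a)) \<Rightarrow> 'd \<Rightarrow> 'd \<Rightarrow> 'd \<Rightarrow> real"
    and f :: "'a \<Rightarrow> real \<Rightarrow> 'e::euclidean_space" and \<sigma> :: real
  assumes cr: "closed_riemannian A M" and sol: "ehmhf_solution A M T f"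
    and ch: "(U, \<phi>, \<psi>) \<in> A" and p0: "p0 \<in> U" and t0: "t0 \<in> {0..<T}"
    and sg: "\<sigma> = 1 \<or> \<sigma> = -1"
    and mx: "\<forall>q. \<sigma> * (f q t0 \<bullet> f q t0) \<le> \<sigma> * (f p0 t0 \<bullet> f p0 t0)"
    and side: "\<sigma> * (f p0 t0 \<bullet> f p0 t0 - 1) \<ge> 0"
  shows "\<sigma> * (f p0 t0 \<bullet> map_laplacian (M (U, \<phi>, \<psi>)) Gmetric (\<lambda>x. f (\<psi> x) t0) (\<phi> p0)) \<le> 0"
proof -
  have hom: "homeomorphism U (\<phi> ` U) \<phi> \<psi>" and openU: "open (\<phi> ` U)"
    using cr_parts(2)[OF cr] ch by blast+
  define x0 where "x0 = \<phi> p0"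
  have x0U: "x0 \<in> \<phi> ` U" unfolding x0_def using p0 by simp
  have psi0: "\<psi> x0 = p0" unfolding x0_def using homeomorphism_apply1[OF hom p0] .
  define F where "F x = f (\<psi> x) t0" for x
  have Fx0: "F x0 = f p0 t0" unfolding F_def psi0 ..
  obtain N where N: "open N" "x0 \<in> N" "N \<subseteq> \<phi> ` U" "\<forall>x\<in>N. F differentiable (at x)"
      "\<forall>j\<in>Basis. pd F j differentiable (at x0)"
    using chart_reg[OF sol openU ch x0U t0] unfolding F_def[abs_def] by blast
  have mxN: "\<forall>x\<in>N. \<sigma> * (F x \<bullet> F x) \<le> \<sigma> * (F x0 \<bullet> F x0)"
    using mx unfolding Fx0 by (simp add: F_def)
  have sg0: "\<sigma> \<noteq> 0" using sg by auto
  note lm = local_max_2nd[OF N(1) N(2) N(4) N(5) sg0 mxN]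
  define y where "y = F x0"
  have y0: "y \<noteq> 0" using sol t0 unfolding y_def Fx0 ehmhf_solution_def by blast
  define D where "D l = pd F l x0" for l
  define Aa where "Aa i j = pd (pd F j) i x0" for i j
  have crit: "D l \<bullet> y = 0" if "l \<in> Basis" for l
    using lm(1) that unfolding D_def y_def by (simp add: inner_commute)
  have crit': "y \<bullet> D l = 0" if "l \<in> Basis" for l
    using crit[OF that] by (simp add: inner_commute)
  define m where "m = M (U, \<phi>, \<psi>)"
  have mb: "bilinear (m x0)" "\<forall>u v. m x0 u v = m x0 v u" "\<forall>u. u \<noteq> 0 \<longrightarrow> m x0 u u > 0"
    using cr_parts(4)[OF cr] ch x0U unfolding m_def by blast+
  define P where "P = inv_comp (m x0)"
  note Pp = inv_comp_props[OF mb, folded P_def]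
  define \<kappa> where "\<kappa> = 2 / ((y \<bullet> y)^2 + 1)"
  have inner: "y \<bullet> (Aa i j - (\<Sum>l\<in>Basis. christoffel m x0 l i j *\<^sub>R D l)
      + (\<Sum>\<alpha>\<in>Basis. (\<Sum>\<beta>\<in>Basis. \<Sum>\<gamma>\<in>Basis. christoffel Gmetric y \<alpha> \<beta> \<gamma> * (D i \<bullet> \<beta>) * (D j \<bullet> \<gamma>)) *\<^sub>R \<alpha>))
      = y \<bullet> Aa i j + \<kappa> * (D i \<bullet> D j)" if ij: "i \<in> Basis" "j \<in> Basis" for i j
  proof -
    have z: "(\<Sum>l\<in>Basis. christoffel m x0 l i j * (y \<bullet> D l)) = 0"
      by (rule sum.neutral) (simp add: crit')
    have c: "(\<Sum>\<alpha>\<in>Basis. (\<Sum>\<beta>\<in>Basis. \<Sum>\<gamma>\<in>Basis. christoffel Gmetric y \<alpha> \<beta> \<gamma> * (D i \<bullet> \<beta>) * (D j \<bullet> \<gamma>)) * (y \<bullet> \<alpha>))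
       = \<kappa> * (D i \<bullet> D j)"
      unfolding \<kappa>_def by (subst christ_sum[OF y0 crit[OF ij(1)] crit[OF ij(2)]]) simp
    show ?thesis
      by (simp only: inner_diff_right inner_add_right inner_sum_right inner_scaleR_right z c diff_zero)
  qed
  have key: "y \<bullet> map_laplacian m Gmetric F x0 = (\<Sum>i\<in>Basis. \<Sum>j\<in>Basis. P i j * (y \<bullet> Aa i j + \<kappa> * (D i \<bullet> D j)))"
    unfolding map_laplacian_def Aa_def[symmetric] D_def[symmetric] y_def[symmetric] P_def[symmetric]
    unfolding inner_sum_right inner_scaleR_right
    by (intro sum.cong refl) (simp only: inner)
  define Q where "Q i j = D i \<bullet> D j + y \<bullet> Aa i j" for i j
  define G where "G = (\<Sum>i\<in>Basis. \<Sum>j\<in>Basis. P i j * (D i \<bullet> D j))"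
  have split: "\<sigma> * (\<Sum>i\<in>Basis. \<Sum>j\<in>Basis. P i j * (y \<bullet> Aa i j + \<kappa> * (D i \<bullet> D j)))
     = (\<Sum>i\<in>Basis. \<Sum>j\<in>Basis. P i j * (\<sigma> * Q i j)) + \<sigma> * (\<kappa> - 1) * G"
  proof -
    have "\<sigma> * (\<Sum>i\<in>Basis. \<Sum>j\<in>Basis. P i j * (y \<bullet> Aa i j + \<kappa> * (D i \<bullet> D j)))
      = (\<Sum>i\<in>Basis. \<Sum>j\<in>Basis. P i j * (\<sigma> * Q i j) + \<sigma> * (\<kappa> - 1) * (P i j * (D i \<bullet> D j)))"
      unfolding sum_distrib_left Q_def by (intro sum.cong refl) (simp add: algebra_simps)
    also have "\<dots> = (\<Sum>i\<in>Basis. \<Sum>j\<in>Basis. P i j * (\<sigma> * Q i j)) + \<sigma> * (\<kappa> - 1) * G"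
      unfolding G_def by (simp add: sum.distrib sum_distrib_left)
    finally show ?thesis .
  qed
  have T1: "(\<Sum>i\<in>Basis. \<Sum>j\<in>Basis. P i j * (\<sigma> * Q i j)) \<le> 0"
  proof (rule trace_le0[OF finite_Basis Pp(1) Pp(2)])
    show "\<forall>v. (\<Sum>i\<in>Basis. \<Sum>j\<in>Basis. v i * v j * (\<sigma> * Q i j)) \<le> 0"
    proof
      fix v :: "'d \<Rightarrow> real"
      have "(\<Sum>i\<in>Basis. \<Sum>j\<in>Basis. v i * v j * (\<sigma> * Q i j))
         = \<sigma> * (\<Sum>i\<in>Basis. \<Sum>j\<in>Basis. v i * v j * (pd F i x0 \<bullet> pd F j x0 + F x0 \<bullet> pd (pd F j) i x0))"
        unfolding sum_distrib_left Q_def D_def Aa_def y_def by (simp add: algebra_simps)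
      then show "(\<Sum>i\<in>Basis. \<Sum>j\<in>Basis. v i * v j * (\<sigma> * Q i j)) \<le> 0"
        using lm(2) by simp
    qed
  qed
  have G0: "G \<ge> 0"
  proof -
    have dij: "D i \<bullet> D j = (\<Sum>\<alpha>\<in>Basis. (D i \<bullet> \<alpha>) * (D j \<bullet> \<alpha>))" for i j by (rule euclidean_inner)
    have "G = (\<Sum>i\<in>Basis. \<Sum>j\<in>Basis. \<Sum>\<alpha>\<in>Basis. (D i \<bullet> \<alpha>) * (D j \<bullet> \<alpha>) * P i j)"
      unfolding G_def by (simp only: dij sum_distrib_left) (simp add: algebra_simps)
    also have "\<dots> = (\<Sum>i\<in>Basis. \<Sum>\<alpha>\<in>Basis. \<Sum>j\<in>Basis. (D i \<bullet> \<alpha>) * (D j \<bullet> \<alpha>) * P i j)"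
      by (intro sum.cong refl) (rule sum.swap)
    also have "\<dots> = (\<Sum>\<alpha>\<in>Basis. \<Sum>i\<in>Basis. \<Sum>j\<in>Basis. (D i \<bullet> \<alpha>) * (D j \<bullet> \<alpha>) * P i j)"
      by (rule sum.swap)
    also have "\<dots> \<ge> 0"
      by (intro sum_nonneg psd_of_pd[OF Pp(2)])
    finally show ?thesis .
  qed
  have sk: "\<sigma> * (\<kappa> - 1) \<le> 0"
  proof -
    have w: "y \<bullet> y > 0" using y0 by simp
    show ?thesis
    proof (cases "\<sigma> = 1")
      case True
      then have "y \<bullet> y \<ge> 1" using side unfolding y_def Fx0 by simp
      then have "(y \<bullet> y)^2 \<ge> 1" by (simp add: one_le_power)
      then have "\<kappa> \<le> 1" unfolding \<kappa>_def by simp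
      then show ?thesis using True by simp
    next
      case False
      then have s: "\<sigma> = -1" using sg by simp
      then have "y \<bullet> y \<le> 1" using side unfolding y_def Fx0 by simp
      then have "(y \<bullet> y)^2 \<le> 1" using w by (simp add: power_le_one)
      moreover have "(y \<bullet> y)^2 + 1 > 0" by (simp add: add_nonneg_pos)
      ultimately have "\<kappa> \<ge> 1" unfolding \<kappa>_def by (simp add: le_divide_eq)
      then show ?thesis using s by simp
    qed
  qed
  have "\<sigma> * (y \<bullet> map_laplacian m Gmetric F x0) \<le> 0"
    unfolding key split using T1 G0 sk by (simp add: mult_nonpos_nonneg add_nonpos_nonpos)
  moreover have "\<psi> (\<phi> p0) = p0" using homeomorphism_apply1[OF hom p0] .
  ultimately show ?thesis unfolding y_def m_def x0_def F_def[abs_def] by simp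
qed

lemma f_cont:
  fixes A :: "('a::t2_space set \<times> ('a \<Rightarrow> 'd::euclidean_space) \<times> ('d \<Rightarrow> 'a)) set"
    and M :: "('a set \<times> ('a \<Rightarrow> 'd) \<times> ('d \<Rightarrow> 'a)) \<Rightarrow> 'd \<Rightarrow> 'd \<Rightarrow> 'd \<Rightarrow> real"
    and f :: "'a \<Rightarrow> real \<Rightarrow> 'e::euclidean_space"
  assumes cr: "closed_riemannian A M" and sol: "ehmhf_solution A M T f"
  shows "continuous_on (UNIV \<times> {0..<T}) (\<lambda>z. f (fst z) (snd z))"
proof (unfold continuous_on_eq_continuous_within, intro ballI)
  fix z :: "'a \<times> real" assume z: "z \<in> UNIV \<times> {0..<T}"
  obtain p t where zpt: "z = (p, t)" by (cases z)
  have t: "t \<in> {0..<T}" using z zpt by simp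
  obtain U \<phi> \<psi> where ch: "(U, \<phi>, \<psi>) \<in> A" and pU: "p \<in> U" using cr_parts(3)[OF cr] by blast
  have oU: "open U" and hom: "homeomorphism U (\<phi> ` U) \<phi> \<psi>" using cr_parts(2)[OF cr] ch by blast+
  have phic: "continuous_on U \<phi>" using homeomorphism_cont1[OF hom] .
  have ss: "smooth_set (\<phi> ` U \<times> {0..<T}) (\<lambda>(x, t). f (\<psi> x) t)"
    using sol ch unfolding ehmhf_solution_def by blast
  obtain W g where W: "open W" "(\<phi> p, t) \<in> W" "smooth_open W g"
    and gW: "\<forall>q\<in>W \<inter> (\<phi> ` U \<times> {0..<T}). g q = (\<lambda>(x, t). f (\<psi> x) t) q"
    using ss pU t unfolding smooth_set_def by blast
  have gc: "continuous_on W g" using W(3) Ck.simps(1) unfolding smooth_open_def by metis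
  define k where "k z = (\<phi> (fst z), snd z)" for z :: "'a \<times> real"
  have kc: "continuous_on (U \<times> UNIV) k"
    unfolding k_def
    by (intro continuous_on_Pair continuous_on_snd continuous_on_compose2[OF phic continuous_on_fst]) auto
  define Ob where "Ob = (U \<times> UNIV) \<inter> k -` W"
  have oOb: "open Ob" unfolding Ob_def using continuous_open_preimage[OF kc open_Times[OF oU open_UNIV] W(1)] .
  have zOb: "(p, t) \<in> Ob" unfolding Ob_def k_def using pU W(2) by simp
  have "isCont k (p, t)"
    using kc open_Times[OF oU open_UNIV] pU unfolding continuous_on_eq_continuous_at[OF open_Times[OF oU open_UNIV]]
    by (metis SigmaI UNIV_I)
  moreover have "isCont g (k (p, t))"
    using gc W by (simp add: continuous_on_eq_continuous_at k_def)
  ultimately have "isCont (\<lambda>z. g (k z)) (p, t)" by (rule isCont_o2)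
  then have c1: "continuous (at (p, t) within UNIV \<times> {0..<T}) (\<lambda>z. g (k z))"
    by (rule continuous_at_imp_continuous_at_within)
  show "continuous (at z within UNIV \<times> {0..<T}) (\<lambda>z. f (fst z) (snd z))"
    unfolding zpt
  proof (rule continuous_transform_within_openin[OF c1])
    show "openin (top_of_set (UNIV \<times> {0..<T})) ((UNIV \<times> {0..<T}) \<inter> Ob)"
      using oOb by blast
    show "(p, t) \<in> (UNIV \<times> {0..<T}) \<inter> Ob" using zOb t by simp
    fix x assume x: "x \<in> (UNIV \<times> {0..<T}) \<inter> Ob"
    obtain q s where xqs: "x = (q, s)" by (cases x)
    have qU: "q \<in> U" and sT: "s \<in> {0..<T}" and kW: "(\<phi> q, s) \<in> W"
      using x xqs unfolding Ob_def k_def by auto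
    have "g (\<phi> q, s) = f (\<psi> (\<phi> q)) s" using gW kW qU sT by auto
    also have "\<dots> = f q s" using homeomorphism_apply1[OF hom qU] by simp
    finally show "g (k x) = f (fst x) (snd x)" unfolding xqs k_def by simp
  qed
qed

lemma time_deriv:
  fixes A :: "('a::t2_space set \<times> ('a \<Rightarrow> 'd::euclidean_space) \<times> ('d \<Rightarrow> 'a)) set"
    and M :: "('a set \<times> ('a \<Rightarrow> 'd) \<times> ('d \<Rightarrow> 'a)) \<Rightarrow> 'd \<Rightarrow> 'd \<Rightarrow> 'd \<Rightarrow> real"
    and f :: "'a \<Rightarrow> real \<Rightarrow> 'e::euclidean_space"
  assumes sol: "ehmhf_solution A M T f" and ch: "(U, \<phi>, \<psi>) \<in> A" and p: "p \<in> U"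
    and t: "0 < t" "t < T"
  shows "((\<lambda>s. f p s \<bullet> f p s) has_real_derivative
     2 * (f p t \<bullet> map_laplacian (M (U, \<phi>, \<psi>)) Gmetric (\<lambda>x. f (\<psi> x) t) (\<phi> p))) (at t)"
proof -
  define L where "L = map_laplacian (M (U, \<phi>, \<psi>)) Gmetric (\<lambda>x. f (\<psi> x) t) (\<phi> p)"
  have "((\<lambda>s. f p s) has_vector_derivative L) (at t within {0..<T})"
    using sol ch p t unfolding ehmhf_solution_def L_def by auto
  moreover have "at t within {0..<T} = at t"
    by (rule at_within_interior) (use t in simp)
  ultimately have v: "((\<lambda>s. f p s) has_derivative (\<lambda>h. h *\<^sub>R L)) (at t)"
    by (simp add: has_vector_derivative_def)
  have "((\<lambda>s. f p s \<bullet> f p s) has_derivative (\<lambda>h. f p t \<bullet> (h *\<^sub>R L) + (h *\<^sub>R L) \<bullet> f p t)) (at t)"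
    by (rule has_derivative_inner[OF v v])
  moreover have "(\<lambda>h. f p t \<bullet> (h *\<^sub>R L) + (h *\<^sub>R L) \<bullet> f p t) = (*) (2 * (f p t \<bullet> L))"
    by (auto simp: fun_eq_iff inner_commute algebra_simps)
  ultimately show ?thesis unfolding L_def[symmetric] by (simp add: has_field_derivative_def)
qed

lemma maxprin:
  fixes \<Phi> :: "'a::topological_space \<times> real \<Rightarrow> real"
  assumes cpt: "compact (UNIV :: 'a set)"
    and cont: "continuous_on (UNIV \<times> {0..<T}) \<Phi>"
    and init: "\<forall>p. \<Phi> (p, 0) < 0"
    and key: "\<forall>p t. 0 < t \<longrightarrow> t < T \<longrightarrow> (\<forall>q. \<Phi> (q, t) \<le> \<Phi> (p, t)) \<longrightarrow> \<Phi> (p, t) = 0 \<longrightarrow>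
                (\<exists>D<0. ((\<lambda>s. \<Phi> (p, s)) has_real_derivative D) (at t))"
  shows "\<forall>p. \<forall>t\<in>{0..<T}. \<Phi> (p, t) < 0"
proof (rule ccontr)
  assume "\<not> ?thesis"
  then obtain p1 t1 where t1: "t1 \<in> {0..<T}" and p1: "\<Phi> (p1, t1) \<ge> 0" by (auto simp: not_less)
  define S where "S = (UNIV :: 'a set) \<times> {0..t1}"
  have cS: "compact S" unfolding S_def using cpt by (intro compact_Times) auto
  have clS: "closed S" unfolding S_def by (intro closed_Times) auto
  have contS: "continuous_on S \<Phi>" unfolding S_def
    by (rule continuous_on_subset[OF cont]) (use t1 in auto)
  define C where "C = S \<inter> \<Phi> -` {0..}"
  have clC: "closed C" unfolding C_def by (rule continuous_closed_preimage[OF contS clS]) auto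
  have cC: "compact C" using compact_Int_closed[OF cS clC] unfolding C_def by (simp add: Int_absorb1)
  have cK: "compact (snd ` C)"
    by (rule compact_continuous_image[OF continuous_on_snd[OF continuous_on_id] cC])
  have neK: "snd ` C \<noteq> {}" using p1 t1 unfolding C_def S_def by force
  obtain t0 where t0K: "t0 \<in> snd ` C" and t0min: "\<forall>t\<in>snd ` C. t0 \<le> t"
    using compact_attains_inf[OF cK neK] by blast
  obtain p0 where p0C: "(p0, t0) \<in> C" using t0K by force
  have t0r: "0 \<le> t0" "t0 \<le> t1" and Phi0: "\<Phi> (p0, t0) \<ge> 0" using p0C unfolding C_def S_def by auto
  have t0T: "t0 < T" using t0r t1 by simp
  have before: "\<Phi> (q, s) < 0" if "0 \<le> s" "s < t0" for q s
  proof (rule ccontr)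
    assume "\<not> \<Phi> (q, s) < 0"
    then have "(q, s) \<in> C" unfolding C_def S_def using that t0r by auto
    then have "t0 \<le> s" using t0min by force
    then show False using that by simp
  qed
  have t0pos: "t0 > 0"
  proof (rule ccontr)
    assume "\<not> t0 > 0" then have "t0 = 0" using t0r by simp
    then show False using Phi0 init by (metis not_le)
  qed
  have tc: "continuous_on {0..<T} (\<lambda>s. \<Phi> (q, s))" for q
    by (rule continuous_on_compose2[OF cont]) (auto intro!: continuous_intros)
  have at0: "\<Phi> (q, t0) \<le> 0" for q
  proof (rule ccontr)
    assume "\<not> \<Phi> (q, t0) \<le> 0"
    then have pos: "\<Phi> (q, t0) > 0" by simp
    obtain d where d: "d > 0" "\<forall>s\<in>{0..<T}. dist s t0 < d \<longrightarrow> dist (\<Phi> (q, s)) (\<Phi> (q, t0)) < \<Phi> (q, t0)"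
      using tc[of q] pos t0r t0T unfolding continuous_on_iff by (meson atLeastLessThan_iff)
    define s where "s = t0 - min d t0 / 2"
    have s: "0 \<le> s" "s < t0" "dist s t0 < d" using d t0pos by (auto simp: s_def dist_real_def)
    then have "dist (\<Phi> (q, s)) (\<Phi> (q, t0)) < \<Phi> (q, t0)" using d(2) t0T by auto
    then have "\<Phi> (q, s) > 0" by (simp add: dist_real_def)
    then show False using before[OF s(1) s(2), of q] by simp
  qed
  have z: "\<Phi> (p0, t0) = 0" using at0[of p0] Phi0 by simp
  have mx: "\<forall>q. \<Phi> (q, t0) \<le> \<Phi> (p0, t0)" using at0 z by simp
  obtain D where D: "D < 0" "((\<lambda>s. \<Phi> (p0, s)) has_real_derivative D) (at t0)"
    using key t0pos t0T mx z by blast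
  obtain d where d: "d > 0" "\<forall>h>0. h < d \<longrightarrow> \<Phi> (p0, t0) < \<Phi> (p0, t0 - h)"
    using DERIV_neg_dec_left[OF D(2) D(1)] by blast
  define h where "h = min d t0 / 2"
  have h: "h > 0" "h < d" "h \<le> t0" using d t0pos by (auto simp: h_def)
  have "\<Phi> (p0, t0 - h) > 0" using d(2) h z by auto
  moreover have "\<Phi> (p0, t0 - h) < 0" using before[of "t0 - h" p0] h by simp
  ultimately show False by simp
qed

lemma side_bound:
  fixes A :: "('a::t2_space set \<times> ('a \<Rightarrow> 'd::euclidean_space) \<times> ('d \<Rightarrow> 'a)) set"
    and M :: "('a set \<times> ('a \<Rightarrow> 'd) \<times> ('d \<Rightarrow> 'a)) \<Rightarrow> 'd \<Rightarrow> 'd \<Rightarrow> 'd \<Rightarrow> real"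
    and f :: "'a \<Rightarrow> real \<Rightarrow> 'e::euclidean_space" and \<sigma> K :: real
  assumes cr: "closed_riemannian A M" and sol: "ehmhf_solution A M T f"
    and sg: "\<sigma> = 1 \<or> \<sigma> = -1" and sK: "\<sigma> * (K - 1) \<ge> 0"
    and init: "\<forall>p. \<sigma> * (f p 0 \<bullet> f p 0 - K) \<le> 0"
  shows "\<forall>p. \<forall>t\<in>{0..<T}. \<sigma> * (f p t \<bullet> f p t - K) \<le> 0"
proof (rule ccontr)
  assume "\<not> ?thesis"
  then obtain p1 t1 where t1: "t1 \<in> {0..<T}" and p1: "\<sigma> * (f p1 t1 \<bullet> f p1 t1 - K) > 0"
    by (auto simp: not_le)
  define \<epsilon> where "\<epsilon> = \<sigma> * (f p1 t1 \<bullet> f p1 t1 - K) / (2 * (1 + t1))"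
  have t1p: "1 + t1 > 0" using t1 by simp
  have ep: "\<epsilon> > 0" unfolding \<epsilon>_def using p1 t1p by simp
  define \<Phi> where "\<Phi> z = \<sigma> * (f (fst z) (snd z) \<bullet> f (fst z) (snd z) - K) - \<epsilon> * (1 + snd z)" for z :: "'a \<times> real"
  have cont: "continuous_on (UNIV \<times> {0..<T}) \<Phi>"
    unfolding \<Phi>_def using f_cont[OF cr sol]
    by (intro continuous_intros) auto
  have init': "\<forall>p. \<Phi> (p, 0) < 0"
  proof
    fix p show "\<Phi> (p, 0) < 0" using init[rule_format, of p] ep unfolding \<Phi>_def by simp
  qed
  have key: "\<forall>p t. 0 < t \<longrightarrow> t < T \<longrightarrow> (\<forall>q. \<Phi> (q, t) \<le> \<Phi> (p, t)) \<longrightarrow> \<Phi> (p, t) = 0 \<longrightarrow>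
                (\<exists>D<0. ((\<lambda>s. \<Phi> (p, s)) has_real_derivative D) (at t))"
  proof (intro allI impI)
    fix p t assume t: "0 < t" "t < T" and mxq: "\<forall>q. \<Phi> (q, t) \<le> \<Phi> (p, t)" and z: "\<Phi> (p, t) = 0"
    obtain U \<phi> \<psi> where ch: "(U, \<phi>, \<psi>) \<in> A" and pU: "p \<in> U" using cr_parts(3)[OF cr] by blast
    have mx: "\<forall>q. \<sigma> * (f q t \<bullet> f q t) \<le> \<sigma> * (f p t \<bullet> f p t)"
      using mxq unfolding \<Phi>_def by (simp add: right_diff_distrib)
    have "\<sigma> * (f p t \<bullet> f p t - K) = \<epsilon> * (1 + t)" using z unfolding \<Phi>_def by simp
    then have "\<sigma> * (f p t \<bullet> f p t - K) > 0" using ep t by simp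
    then have side: "\<sigma> * (f p t \<bullet> f p t - 1) \<ge> 0" using sK by (simp add: right_diff_distrib)
    define L where "L = map_laplacian (M (U, \<phi>, \<psi>)) Gmetric (\<lambda>x. f (\<psi> x) t) (\<phi> p)"
    have sL: "\<sigma> * (f p t \<bullet> L) \<le> 0"
      unfolding L_def by (rule pointwise[OF cr sol ch pU _ sg mx side]) (use t in simp)
    have td: "((\<lambda>s. f p s \<bullet> f p s) has_real_derivative 2 * (f p t \<bullet> L)) (at t)"
      unfolding L_def by (rule time_deriv[OF sol ch pU t])
    have "((\<lambda>s. \<sigma> * (f p s \<bullet> f p s - K) - \<epsilon> * (1 + s)) has_real_derivative \<sigma> * (2 * (f p t \<bullet> L)) - \<epsilon>) (at t)"
      by (rule derivative_eq_intros td refl | simp)+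
    then have "((\<lambda>s. \<Phi> (p, s)) has_real_derivative \<sigma> * (2 * (f p t \<bullet> L)) - \<epsilon>) (at t)"
      unfolding \<Phi>_def by simp
    moreover have "\<sigma> * (2 * (f p t \<bullet> L)) - \<epsilon> < 0" using sL ep by simp
    ultimately show "\<exists>D<0. ((\<lambda>s. \<Phi> (p, s)) has_real_derivative D) (at t)" by blast
  qed
  have "\<forall>p. \<forall>t\<in>{0..<T}. \<Phi> (p, t) < 0"
    by (rule maxprin[OF cr_parts(1)[OF cr] cont init' key])
  then have "\<Phi> (p1, t1) < 0" using t1 by blast
  then have "\<sigma> * (f p1 t1 \<bullet> f p1 t1 - K) < \<epsilon> * (1 + t1)" unfolding \<Phi>_def by simp
  also have "\<epsilon> * (1 + t1) = \<sigma> * (f p1 t1 \<bullet> f p1 t1 - K) / 2" unfolding \<epsilon>_def using t1p by (simp add: field_simps)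
  finally show False using p1 by simp
qed

theorem mainTheorem2:
  fixes A :: "('a::t2_space set \<times> ('a \<Rightarrow> 'd::euclidean_space) \<times> ('d \<Rightarrow> 'a)) set"
    and M :: "('a set \<times> ('a \<Rightarrow> 'd) \<times> ('d \<Rightarrow> 'a)) \<Rightarrow> 'd \<Rightarrow> 'd \<Rightarrow> 'd \<Rightarrow> real"
    and f :: "'a \<Rightarrow> real \<Rightarrow> 'e::euclidean_space"
    and T \<delta> :: real
  assumes "closed_riemannian A M"
    and "T > 0"
    and "ehmhf_solution A M T f"
    and "0 \<le> \<delta>" and "\<delta> < 1"
    and "\<forall>p. \<bar>norm (f p 0) - 1\<bar> \<le> \<delta>"
  shows "\<forall>p. \<forall>t\<in>{0..<T}. \<bar>norm (f p t) - 1\<bar> \<le> \<delta>"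
proof -
  note cr = assms(1) and sol = assms(3)
  have nn: "f p t \<bullet> f p t = (norm (f p t))^2" for p t by (simp add: power2_norm_eq_inner)
  have up: "\<forall>p. \<forall>t\<in>{0..<T}. 1 * (f p t \<bullet> f p t - (1 + \<delta>)^2) \<le> 0"
  proof (rule side_bound[OF cr sol])
    show "(1::real) = 1 \<or> (1::real) = -1" by simp
    have "1 \<le> (1 + \<delta>)^2" using assms(4) by (simp add: one_le_power)
    then show "1 * ((1 + \<delta>)^2 - 1) \<ge> 0" by simp
    show "\<forall>p. 1 * (f p 0 \<bullet> f p 0 - (1 + \<delta>)^2) \<le> 0"
    proof
      fix p
      have "norm (f p 0) \<le> 1 + \<delta>" using assms(6)[rule_format, of p] by (simp add: abs_le_iff)
      then have "(norm (f p 0))^2 \<le> (1 + \<delta>)^2" by (simp add: power_mono)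
      then show "1 * (f p 0 \<bullet> f p 0 - (1 + \<delta>)^2) \<le> 0" by (simp add: nn)
    qed
  qed
  have lo: "\<forall>p. \<forall>t\<in>{0..<T}. -1 * (f p t \<bullet> f p t - (1 - \<delta>)^2) \<le> 0"
  proof (rule side_bound[OF cr sol])
    show "(-1::real) = 1 \<or> (-1::real) = -1" by simp
    have "(1 - \<delta>)^2 \<le> 1" using assms(4,5) by (simp add: power_le_one)
    then show "-1 * ((1 - \<delta>)^2 - 1) \<ge> 0" by simp
    show "\<forall>p. -1 * (f p 0 \<bullet> f p 0 - (1 - \<delta>)^2) \<le> 0"
    proof
      fix p
      have "1 - \<delta> \<le> norm (f p 0)" using assms(6)[rule_format, of p] by (simp add: abs_le_iff)
      then have "(1 - \<delta>)^2 \<le> (norm (f p 0))^2" using assms(5) by (simp add: power_mono)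
      then show "-1 * (f p 0 \<bullet> f p 0 - (1 - \<delta>)^2) \<le> 0" by (simp add: nn)
    qed
  qed
  show ?thesis
  proof (intro allI ballI)
    fix p t assume t: "t \<in> {0..<T}"
    have a: "(norm (f p t))^2 \<le> (1 + \<delta>)^2" using up t by (simp add: nn)
    have b: "(1 - \<delta>)^2 \<le> (norm (f p t))^2" using lo t by (simp add: nn)
    have "norm (f p t) \<le> 1 + \<delta>" using power2_le_imp_le[OF a] assms(4) by simp
    moreover have "1 - \<delta> \<le> norm (f p t)" using power2_le_imp_le[OF b] by simp
    ultimately show "\<bar>norm (f p t) - 1\<bar> \<le> \<delta>" by (simp add: abs_le_iff)
  qed
qed

end
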